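(* Let $\mathcal{X},\mathcal{Y}$ be finite sets, $P_X$ a probability distribution on $\mathcal{X}$, $d:\mathcal{X}\times\mathcal{Y}\to[0,\infty)$ a distortion function with $d(x,y)\le d_{max}$ for all $x,y$, and $Q_Y$ a probability distribution on $\mathcal{Y}$. Let $R\ge 0$ be such that $e^R$ is an integer, $M=e^R+1$, $X\sim P_X$, and $Y_0,\dots,Y_{M-1}$ i.i.d. $\sim Q_Y$ independent of $X$. Then for every $\lambda<R$, $$\mathbb{E}\Big[\min_i d(X,Y_i)\Big]\le \tilde D\big(e^{-(R-\lambda)},Q_Y\big)+\Big(\tilde D(1,Q_Y)-\tilde D\big(e^{-(R-\lambda)},Q_Y\big)\Big)e^{-e^{\lambda}}(e^{\lambda}+1)\le \tilde D\big(e^{-(R-\lambda)},Q_Y\big)+d_{max}\, e^{-e^{\lambda}}(e^{\lambda}+1).$$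
   Context: For $x\in\mathcal{X}$, $y\in\mathcal{Y}$, $u\in[0,1]$ let $p_{c,x,y,u}=Q_Y\{y': d(x,y')<d(x,y)\}+u\cdot Q_Y\{y': d(x,y')=d(x,y)\}$. For $w\in(0,1]$ define $\tilde D(w,Q_Y)=w^{-1}\,\mathbb{E}[d(X,Y)\mathbf{1}\{p_{c,X,Y,U}\le w\}]$, where $X\sim P_X$, $Y\sim Q_Y$, $U$ uniform on $[0,1]$ are independent. *)

theory Defs
  imports "HOL-Probability.Probability"
begin

definition p_c :: "('x \<Rightarrow> 'y \<Rightarrow> real) \<Rightarrow> 'y pmf \<Rightarrow> 'x \<Rightarrow> 'y \<Rightarrow> real \<Rightarrow> real" where
  "p_c d Q x y u =
     measure_pmf.prob Q {y'. d x y' < d x y} + u * measure_pmf.prob Q {y'. d x y' = d x y}"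

definition D_tilde :: "'x pmf \<Rightarrow> ('x \<Rightarrow> 'y \<Rightarrow> real) \<Rightarrow> real \<Rightarrow> 'y pmf \<Rightarrow> real" where
  "D_tilde P d w Q = inverse w *
     (\<integral>(x, y, u). d x y * of_bool (p_c d Q x y u \<le> w)
        \<partial>(measure_pmf P \<Otimes>\<^sub>M (measure_pmf Q \<Otimes>\<^sub>M uniform_measure lborel {0..1::real})))"

end

theory Submission
  imports Defs "HOL-Analysis.Analysis"
begin


definition UU :: "real measure" where "UU = uniform_measure lborel {0..1::real}"

lemma prob_UU: "prob_space UU"
  unfolding UU_def by (rule prob_space_uniform_measure) auto

lemma sets_UU[measurable_cong, simp]: "sets UU = sets borel"
  unfolding UU_def by simp

definition mm :: "real \<Rightarrow> real \<Rightarrow> real \<Rightarrow> real" where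
  "mm a b w = (\<integral>u. of_bool (a + u * b \<le> w) \<partial>UU)"

lemma pmf_sum_int:
  fixes f :: "'a::finite \<Rightarrow> real"
  shows "measure_pmf.expectation P f = (\<Sum>x\<in>UNIV. pmf P x * f x)"
  by (subst integral_measure_pmf[of UNIV]) auto

lemma D_reduce:
  fixes d :: "'x::finite \<Rightarrow> 'y::finite \<Rightarrow> real" and a b :: "'x \<Rightarrow> 'y \<Rightarrow> real"
  assumes bnd: "\<And>x y. \<bar>d x y\<bar> \<le> K"
  shows "(\<integral>(x, y, u). d x y * of_bool (a x y + u * b x y \<le> w) \<partial>(measure_pmf P \<Otimes>\<^sub>M (measure_pmf Q \<Otimes>\<^sub>M UU)))
     = (\<Sum>x\<in>UNIV. pmf P x * (\<Sum>y\<in>UNIV. pmf Q y * (d x y * mm (a x y) (b x y) w)))"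
proof -
  interpret U: prob_space UU by (rule prob_UU)
  interpret QU: pair_prob_space "measure_pmf Q" UU by unfold_locales
  have QU': "finite_measure (measure_pmf Q \<Otimes>\<^sub>M UU)" by (rule prob_space.finite_measure, rule QU.P.prob_space_axioms)
  interpret PQU: pair_prob_space "measure_pmf P" "measure_pmf Q \<Otimes>\<^sub>M UU" by unfold_locales
  have PQU': "finite_measure (measure_pmf P \<Otimes>\<^sub>M (measure_pmf Q \<Otimes>\<^sub>M UU))" by (rule prob_space.finite_measure, rule PQU.P.prob_space_axioms)
  have meas: "(\<lambda>(x, y, u). d x y * of_bool (a x y + u * b x y \<le> w)) \<in> borel_measurable (measure_pmf P \<Otimes>\<^sub>M (measure_pmf Q \<Otimes>\<^sub>M UU))"
  proof -
    have "(\<lambda>z. (\<lambda>x z. (\<lambda>y z. d x y * of_bool (a x y + snd (snd z) * b x y \<le> w)) (fst (snd z)) z) (fst z) z) \<in> borel_measurable (measure_pmf P \<Otimes>\<^sub>M (measure_pmf Q \<Otimes>\<^sub>M UU))"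
      apply (rule measurable_compose_countable[where g=fst])
       apply (rule measurable_compose_countable[where g="\<lambda>z. fst (snd z)"])
        apply measurable
      done
    then show ?thesis by (simp add: case_prod_beta)
  qed
  have int1: "integrable (measure_pmf P \<Otimes>\<^sub>M (measure_pmf Q \<Otimes>\<^sub>M UU)) (\<lambda>(x, y, u). d x y * of_bool (a x y + u * b x y \<le> w))"
    by (rule finite_measure.integrable_const_bound[OF PQU', where B=K]) (use meas in \<open>auto intro!: AE_I2 simp: abs_mult split: prod.splits intro: order_trans[OF abs_ge_zero bnd] bnd\<close>)
  have meas2: "\<And>x. (\<lambda>(y, u). d x y * of_bool (a x y + u * b x y \<le> w)) \<in> borel_measurable (measure_pmf Q \<Otimes>\<^sub>M UU)"
  proof -
    fix x
    have "(\<lambda>z. (\<lambda>y z. d x y * of_bool (a x y + snd z * b x y \<le> w)) (fst z) z) \<in> borel_measurable (measure_pmf Q \<Otimes>\<^sub>M UU)"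
      apply (rule measurable_compose_countable[where g=fst])
        apply measurable
      done
    then show "(\<lambda>(y, u). d x y * of_bool (a x y + u * b x y \<le> w)) \<in> borel_measurable (measure_pmf Q \<Otimes>\<^sub>M UU)"
      by (simp add: case_prod_beta)
  qed
  have int2: "\<And>x. integrable (measure_pmf Q \<Otimes>\<^sub>M UU) (\<lambda>(y, u). d x y * of_bool (a x y + u * b x y \<le> w))"
    by (rule finite_measure.integrable_const_bound[OF QU', where B=K]) (use meas2 in \<open>auto intro!: AE_I2 simp: abs_mult split: prod.splits intro: order_trans[OF abs_ge_zero bnd] bnd\<close>)
  have "(\<integral>(x, y, u). d x y * of_bool (a x y + u * b x y \<le> w) \<partial>(measure_pmf P \<Otimes>\<^sub>M (measure_pmf Q \<Otimes>\<^sub>M UU)))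
     = (\<integral>x. (\<integral>(y, u). d x y * of_bool (a x y + u * b x y \<le> w) \<partial>(measure_pmf Q \<Otimes>\<^sub>M UU)) \<partial>measure_pmf P)"
    using PQU.integral_fst'[OF int1] by (simp add: case_prod_unfold)
  also have "\<dots> = (\<integral>x. (\<integral>y. (\<integral>u. d x y * of_bool (a x y + u * b x y \<le> w) \<partial>UU) \<partial>measure_pmf Q) \<partial>measure_pmf P)"
    using QU.integral_fst'[OF int2] by (simp add: case_prod_unfold)
  also have "\<dots> = (\<integral>x. (\<integral>y. d x y * mm (a x y) (b x y) w \<partial>measure_pmf Q) \<partial>measure_pmf P)"
    by (simp add: mm_def)
  also have "\<dots> = (\<Sum>x\<in>UNIV. pmf P x * (\<Sum>y\<in>UNIV. pmf Q y * (d x y * mm (a x y) (b x y) w)))"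
    by (simp add: pmf_sum_int)
  finally show ?thesis .
qed

lemma mm_eq:
  assumes t: "0 \<le> t" "t \<le> 1" and iff: "\<And>u. 0 \<le> u \<Longrightarrow> u \<le> 1 \<Longrightarrow> (a + u * b \<le> w) = (u \<le> t)"
  shows "mm a b w = t"
proof -
  interpret U: prob_space UU by (rule prob_UU)
  have AE01: "AE u in UU. u \<in> {0..1}"
    unfolding UU_def by (rule AE_uniform_measureI) auto
  have "mm a b w = (\<integral>u. indicator {..t} u \<partial>UU)"
    unfolding mm_def
  proof (rule integral_cong_AE)
    show "AE u in UU. of_bool (a + u * b \<le> w) = indicator {..t} u"
      using AE01 by (rule eventually_mono) (auto simp: iff indicator_def)
  qed auto
  also have "\<dots> = measure UU {..t}" by simp
  also have "\<dots> = measure lborel ({0..1} \<inter> {..t}) / measure lborel {0..1::real}"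
    unfolding UU_def by (rule measure_uniform_measure) auto
  also have "{0..1} \<inter> {..t} = {0..t}" using t by auto
  finally show ?thesis using t by simp
qed

lemma mm_bounds: "0 \<le> mm a b w" "mm a b w \<le> 1"
proof -
  interpret U: prob_space UU by (rule prob_UU)
  show "0 \<le> mm a b w" unfolding mm_def by (rule Bochner_Integration.integral_nonneg) auto
  have "mm a b w \<le> (\<integral>u. 1 \<partial>UU)" unfolding mm_def
    by (rule integral_mono) (auto intro!: U.integrable_const_bound[where B=1])
  then show "mm a b w \<le> 1" using U.prob_space by simp
qed

definition indK :: "real \<Rightarrow> real \<Rightarrow> real" where "indK K s = indicator {0..K} s"

lemma intK:
  assumes "f \<in> borel_measurable borel" "\<And>s. \<bar>f s\<bar> \<le> B"
  shows "integrable lborel (\<lambda>s. indK K s * f s)"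
proof -
  have "emeasure lborel {0..K} < \<top>" by (cases "0 \<le> K") auto
  then show ?thesis
    unfolding indK_def
    using integrableI_bounded_set_indicator[of "{0..K}" lborel f B] assms by auto
qed

lemma layer:
  assumes "0 \<le> z" "z \<le> K"
  shows "(\<integral>s. indK K s * of_bool (s < z) \<partial>lborel) = z"
proof -
  have "(\<integral>s. indK K s * of_bool (s < z) \<partial>lborel) = (\<integral>s. indicator {0..<z} s \<partial>lborel)"
    by (rule Bochner_Integration.integral_cong) (use assms in \<open>auto simp: indK_def indicator_def\<close>)
  also have "\<dots> = z" using assms by simp
  finally show ?thesis .
qed

lemma meas_less[measurable]: "(\<lambda>s::real. of_bool (s < z) :: real) \<in> borel_measurable borel"
  by measurable



lemma prob_sum_fin: "measure_pmf.prob (Q :: 'y::finite pmf) A = (\<Sum>y\<in>UNIV. pmf Q y * of_bool (y \<in> A))"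
proof -
  have "measure_pmf.prob Q A = sum (pmf Q) A" by (rule measure_measure_pmf_finite) simp
  also have "\<dots> = (\<Sum>y\<in>UNIV. if y \<in> A then pmf Q y else 0)"
    using sum.inter_filter[of UNIV "pmf Q" "\<lambda>y. y \<in> A"] by simp
  finally show ?thesis by (simp add: of_bool_def if_distrib cong: if_cong)
qed

lemma mass:
  fixes D :: "'y::finite \<Rightarrow> real" and Q :: "'y pmf"
  assumes w: "0 < w" "w \<le> 1"
  shows "w \<le> (\<Sum>y\<in>UNIV. pmf Q y * mm (measure_pmf.prob Q {y'. D y' < D y}) (measure_pmf.prob Q {y'. D y' = D y}) w)"
proof -
  define a where "a v = measure_pmf.prob Q {y'. D y' < v}" for v
  define b where "b v = measure_pmf.prob Q {y'. D y' = v}" for v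
  define c where "c v = measure_pmf.prob Q {y'. D y' \<le> v}" for v
  have cab: "c v = a v + b v" for v
  proof -
    have "{y'. D y' \<le> v} = {y'. D y' < v} \<union> {y'. D y' = v}" by auto
    then show ?thesis unfolding a_def b_def c_def
      by (simp add: measure_pmf.finite_measure_Union disjoint_iff)
  qed
  have b0: "0 \<le> b v" for v unfolding b_def by simp
  have a0: "0 \<le> a v" for v unfolding a_def by simp
  have mm1: "mm (a (D y)) (b (D y)) w = 1" if "c (D y) \<le> w" for y
    by (rule mm_eq) (use that cab b0 in \<open>auto intro: order_trans[of _ "a (D y) + b (D y)"] simp: mult_left_le_one_le\<close>)
  define B where "B = {v \<in> range D. w < c v}"
  have finB: "finite B" unfolding B_def by simp
  show ?thesis
  proof (cases "B = {}")
    case True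
    then have "\<And>y. c (D y) \<le> w" unfolding B_def by (metis (mono_tags, lifting) empty_iff mem_Collect_eq not_le rangeI)
    then have "(\<Sum>y\<in>UNIV. pmf Q y * mm (a (D y)) (b (D y)) w) = (\<Sum>y\<in>UNIV. pmf Q y)"
      using mm1 by simp
    also have "\<dots> = 1" by (rule sum_pmf_eq_1) auto
    finally show ?thesis using w unfolding a_def b_def by simp
  next
    case False
    define z where "z = Min B"
    have zB: "z \<in> B" unfolding z_def using False finB by simp
    have below: "c v \<le> w" if "v \<in> range D" "v < z" for v
    proof (rule ccontr)
      assume "\<not> c v \<le> w"
      then have "v \<in> B" using that unfolding B_def by auto
      then have "z \<le> v" unfolding z_def using finB by simp
      then show False using that by simp
    qed
    have az: "a z \<le> w"
    proof (cases "\<exists>y. D y < z")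
      case True
      define v0 where "v0 = Max (D ` {y. D y < z})"
      have v0in: "v0 \<in> D ` {y. D y < z}" unfolding v0_def using True by (intro Max_in) auto
      have "{y'. D y' < z} = {y'. D y' \<le> v0}"
      proof (intro equalityI subsetI)
        fix y assume "y \<in> {y'. D y' < z}"
        then show "y \<in> {y'. D y' \<le> v0}" unfolding v0_def by (auto intro: Max_ge)
      next
        fix y assume "y \<in> {y'. D y' \<le> v0}"
        then show "y \<in> {y'. D y' < z}" using v0in by auto
      qed
      then have "a z = c v0" unfolding a_def c_def by simp
      also have "\<dots> \<le> w" using v0in by (intro below) auto
      finally show ?thesis .
    next
      case False
      then have "{y'. D y' < z} = {}" by auto
      then show ?thesis unfolding a_def using w by simp
    qed
    have cz: "w < c z" using zB unfolding B_def by auto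
    have bz: "0 < b z" using az cz cab[of z] by simp
    define t where "t = (w - a z) / b z"
    have t01: "0 \<le> t" "t \<le> 1" unfolding t_def using az cz cab[of z] bz by (auto simp: field_simps)
    have mmz: "mm (a (D y)) (b (D y)) w = t" if "D y = z" for y
      by (rule mm_eq) (use t01 bz that in \<open>auto simp: t_def pos_le_divide_eq algebra_simps\<close>)
    have mmlt: "mm (a (D y)) (b (D y)) w = 1" if "D y < z" for y
      by (rule mm1, rule below) (use that in auto)
    have "(\<Sum>y\<in>UNIV. pmf Q y * (of_bool (D y < z) + t * of_bool (D y = z)))
          \<le> (\<Sum>y\<in>UNIV. pmf Q y * mm (a (D y)) (b (D y)) w)"
    proof (rule sum_mono)
      fix y :: 'y
      have "of_bool (D y < z) + t * of_bool (D y = z) \<le> mm (a (D y)) (b (D y)) w"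
        using mmz[of y] mmlt[of y] mm_bounds(1)[of "a (D y)" "b (D y)" w] by auto
      then show "pmf Q y * (of_bool (D y < z) + t * of_bool (D y = z)) \<le> pmf Q y * mm (a (D y)) (b (D y)) w"
        by (intro mult_left_mono) auto
    qed
    moreover have "(\<Sum>y\<in>UNIV. pmf Q y * (of_bool (D y < z) + t * of_bool (D y = z))) = a z + t * b z"
    proof -
      have e1: "(\<Sum>y\<in>UNIV. pmf Q y * of_bool (D y < z)) = a z" unfolding a_def prob_sum_fin by simp
      have e2: "(\<Sum>y\<in>UNIV. pmf Q y * of_bool (D y = z)) = b z" unfolding b_def prob_sum_fin by simp
      have "(\<Sum>y\<in>UNIV. pmf Q y * (of_bool (D y < z) + t * of_bool (D y = z)))
          = (\<Sum>y\<in>UNIV. pmf Q y * of_bool (D y < z)) + t * (\<Sum>y\<in>UNIV. pmf Q y * of_bool (D y = z))"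
        unfolding sum_distrib_left sum.distrib[symmetric] by (rule sum.cong) (auto simp: algebra_simps)
      then show ?thesis using e1 e2 by simp
    qed
    moreover have "a z + t * b z = w" unfolding t_def using bz by simp
    ultimately show ?thesis unfolding a_def b_def by simp
  qed
qed



lemma pmf_sum_set:
  fixes f :: "'a \<Rightarrow> real"
  assumes "finite (set_pmf p)"
  shows "measure_pmf.expectation p f = (\<Sum>x\<in>set_pmf p. pmf p x * f x)"
  by (subst integral_measure_pmf[of "set_pmf p"]) (use assms in auto)

lemma swap:
  fixes F :: "'a \<Rightarrow> real \<Rightarrow> real"
  assumes fin: "finite (set_pmf p)" and int: "\<And>x. integrable lborel (F x)"
  shows "measure_pmf.expectation p (\<lambda>x. \<integral>s. F x s \<partial>lborel) = (\<integral>s. measure_pmf.expectation p (\<lambda>x. F x s) \<partial>lborel)"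
proof -
  have "measure_pmf.expectation p (\<lambda>x. \<integral>s. F x s \<partial>lborel) = (\<Sum>x\<in>set_pmf p. pmf p x * (\<integral>s. F x s \<partial>lborel))"
    by (rule pmf_sum_set[OF fin])
  also have "\<dots> = (\<Sum>x\<in>set_pmf p. (\<integral>s. pmf p x * F x s \<partial>lborel))"
    by simp
  also have "\<dots> = (\<integral>s. (\<Sum>x\<in>set_pmf p. pmf p x * F x s) \<partial>lborel)"
    by (rule Bochner_Integration.integral_sum[symmetric]) (use int in auto)
  also have "\<dots> = (\<integral>s. measure_pmf.expectation p (\<lambda>x. F x s) \<partial>lborel)"
    by (simp add: pmf_sum_set[OF fin])
  finally show ?thesis .
qed

lemma layer_sum:
  fixes D :: "'y::finite \<Rightarrow> real" and h :: "'y \<Rightarrow> real"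
  assumes D: "\<And>y. 0 \<le> D y" "\<And>y. D y \<le> K"
  shows "(\<integral>s. indK K s * (\<Sum>y\<in>UNIV. pmf Q y * h y * of_bool (s < D y)) \<partial>lborel)
       = (\<Sum>y\<in>UNIV. pmf Q y * h y * D y)"
proof -
  have "(\<integral>s. indK K s * (\<Sum>y\<in>UNIV. pmf Q y * h y * of_bool (s < D y)) \<partial>lborel)
      = (\<integral>s. (\<Sum>y\<in>UNIV. pmf Q y * h y * (indK K s * of_bool (s < D y))) \<partial>lborel)"
    by (simp add: sum_distrib_left algebra_simps)
  also have "\<dots> = (\<Sum>y\<in>UNIV. (\<integral>s. pmf Q y * h y * (indK K s * of_bool (s < D y)) \<partial>lborel))"
    by (rule Bochner_Integration.integral_sum) (auto intro!: intK[where B=1])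
  also have "\<dots> = (\<Sum>y\<in>UNIV. pmf Q y * h y * D y)"
    by (simp add: layer D)
  finally show ?thesis .
qed

lemma min_layer:
  fixes D :: "'y \<Rightarrow> real" and M :: nat
  assumes D: "\<And>y. 0 \<le> D y" "\<And>y. D y \<le> K" and M: "0 < M"
  shows "Min ((\<lambda>i. D (ys i)) ` {..<M}) = (\<integral>s. indK K s * (\<Prod>i<M. of_bool (s < D (ys i))) \<partial>lborel)"
proof -
  let ?m = "Min ((\<lambda>i. D (ys i)) ` {..<M})"
  have ne: "(\<lambda>i. D (ys i)) ` {..<M} \<noteq> {}" using M by auto
  have mem: "?m \<in> (\<lambda>i. D (ys i)) ` {..<M}" by (rule Min_in) (use ne in auto)
  have "(\<Prod>i<M. of_bool (s < D (ys i)) :: real) = of_bool (s < ?m)" for s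
  proof -
    have "(\<Prod>i<M. of_bool (s < D (ys i)) :: real) = of_bool (\<forall>i<M. s < D (ys i))"
      by (induction M) (auto simp: lessThan_Suc less_Suc_eq)
    also have "(\<forall>i<M. s < D (ys i)) = (s < ?m)" using ne by (subst Min_gr_iff) (auto simp: finite_imageI)
    finally show ?thesis .
  qed
  then have "(\<integral>s. indK K s * (\<Prod>i<M. of_bool (s < D (ys i))) \<partial>lborel) = (\<integral>s. indK K s * of_bool (s < ?m) \<partial>lborel)"
    by simp
  also have "\<dots> = ?m" using mem D by (intro layer) auto
  finally show ?thesis by simp
qed

lemma E1:
  fixes D :: "'y::finite \<Rightarrow> real" and Q :: "'y pmf" and M :: nat
  assumes D: "\<And>y. 0 \<le> D y" "\<And>y. D y \<le> K" and M: "0 < M"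
  shows "measure_pmf.expectation (Pi_pmf {..<M} dflt (\<lambda>_. Q)) (\<lambda>ys. Min ((\<lambda>i. D (ys i)) ` {..<M}))
    = (\<integral>s. indK K s * (\<Sum>y\<in>UNIV. pmf Q y * of_bool (s < D y)) ^ M \<partial>lborel)"
proof -
  let ?P = "Pi_pmf {..<M} dflt (\<lambda>_. Q)"
  have fin: "finite (set_pmf ?P)" by (simp add: set_Pi_pmf finite_PiE_dflt)
  have "measure_pmf.expectation ?P (\<lambda>ys. Min ((\<lambda>i. D (ys i)) ` {..<M}))
      = measure_pmf.expectation ?P (\<lambda>ys. \<integral>s. indK K s * (\<Prod>i<M. of_bool (s < D (ys i))) \<partial>lborel)"
    by (rule Bochner_Integration.integral_cong[OF refl], rule min_layer) (use D M in auto)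
  also have "\<dots> = (\<integral>s. measure_pmf.expectation ?P (\<lambda>ys. indK K s * (\<Prod>i<M. of_bool (s < D (ys i)))) \<partial>lborel)"
    by (rule swap[OF fin]) (auto intro!: intK[where B=1] simp: abs_prod prod_le_1)
  also have "\<dots> = (\<integral>s. indK K s * (\<Sum>y\<in>UNIV. pmf Q y * of_bool (s < D y)) ^ M \<partial>lborel)"
  proof (rule Bochner_Integration.integral_cong[OF refl])
    fix s
    have "measure_pmf.expectation ?P (\<lambda>ys. (\<Prod>i<M. of_bool (s < D (ys i)) :: real))
        = (\<Prod>i<M. measure_pmf.expectation Q (\<lambda>y. of_bool (s < D y)))"
      by (rule expectation_prod_Pi_pmf) (auto intro!: integrable_measure_pmf_finite)
    also have "\<dots> = (\<Sum>y\<in>UNIV. pmf Q y * of_bool (s < D y)) ^ M"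
      by (simp add: pmf_sum_int)
    finally show "measure_pmf.expectation ?P (\<lambda>ys. indK K s * (\<Prod>i<M. of_bool (s < D (ys i))))
        = indK K s * (\<Sum>y\<in>UNIV. pmf Q y * of_bool (s < D y)) ^ M"
      by simp
  qed
  finally show ?thesis .
qed



lemma convex_pow: "convex_on {0::real..} (\<lambda>x. x ^ n)"
proof (cases "even n")
  case True
  then show ?thesis using convex_power_even convex_on_subset by blast
next
  case False
  then show ?thesis using convex_power_odd by blast
qed

lemma pw:
  fixes \<tau> w c :: real and N :: nat
  assumes t: "0 \<le> \<tau>" "\<tau> \<le> 1" and w: "0 < w" "w \<le> 1"
    and cN: "(1 - w) ^ N \<le> c" and c1: "c \<le> 1"
  shows "\<tau> ^ Suc N \<le> (1 - c) / w * max 0 (\<tau> - 1 + w) + c * \<tau>"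
proof (cases "\<tau> \<le> 1 - w")
  case True
  have "\<tau> ^ N \<le> (1 - w) ^ N" using True t by (intro power_mono) auto
  then have "\<tau> ^ N \<le> c" using cN by linarith
  then have "\<tau> ^ Suc N \<le> c * \<tau>" using t by (simp add: mult_left_mono mult.commute)
  moreover have "0 \<le> (1 - c) / w * max 0 (\<tau> - 1 + w)" using c1 w by auto
  ultimately show ?thesis by linarith
next
  case False
  define a where "a = 1 - w"
  define \<theta> where "\<theta> = (\<tau> - a) / w"
  have a0: "0 \<le> a" using w unfolding a_def by simp
  have th: "0 \<le> \<theta>" "\<theta> \<le> 1" using False t w unfolding \<theta>_def a_def by (auto simp: field_simps)
  have tau_eq: "\<tau> = (1 - \<theta>) * a + \<theta> * 1" unfolding \<theta>_def a_def using w by (simp add: field_simps)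
  have "\<tau> ^ Suc N = ((1 - \<theta>) *\<^sub>R a + \<theta> *\<^sub>R 1) ^ Suc N" using tau_eq by simp
  also have "\<dots> \<le> (1 - \<theta>) * a ^ Suc N + \<theta> * 1 ^ Suc N"
    by (rule convex_onD[OF convex_pow]) (use th a0 in auto)
  also have "\<dots> \<le> (1 - \<theta>) * (c * a) + \<theta>"
  proof -
    have "a ^ N \<le> c" using cN unfolding a_def .
    then have "a ^ Suc N \<le> c * a" using a0 by (simp add: mult_left_mono mult.commute)
    then show ?thesis using th by (simp add: mult_left_mono)
  qed
  also have "\<dots> = (1 - c) / w * max 0 (\<tau> - 1 + w) + c * \<tau>"
  proof -
    have "max 0 (\<tau> - 1 + w) = \<theta> * w" unfolding \<theta>_def a_def using False w by auto
    then have e': "(1 - c) / w * max 0 (\<tau> - 1 + w) = (1 - c) * \<theta>" using w by simp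
    have ct: "c * \<tau> = c * ((1 - \<theta>) * a + \<theta> * 1)" using tau_eq by simp
    show ?thesis unfolding e' ct by (simp add: algebra_simps)
  qed
  finally show ?thesis .
qed



lemma perx:
  fixes D :: "'y::finite \<Rightarrow> real" and Q :: "'y pmf" and N :: nat
  assumes D: "\<And>y. 0 \<le> D y" "\<And>y. D y \<le> K"
    and w: "0 < w" "w \<le> 1" and cN: "(1 - w) ^ N \<le> c" and c1: "c \<le> 1"
  shows "measure_pmf.expectation (Pi_pmf {..<Suc N} dflt (\<lambda>_. Q)) (\<lambda>ys. Min ((\<lambda>i. D (ys i)) ` {..<Suc N}))
    \<le> (1 - c) / w * (\<Sum>y\<in>UNIV. pmf Q y * (D y * mm (measure_pmf.prob Q {y'. D y' < D y}) (measure_pmf.prob Q {y'. D y' = D y}) w))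
      + c * (\<Sum>y\<in>UNIV. pmf Q y * D y)"
proof -
  define m where "m y = mm (measure_pmf.prob Q {y'. D y' < D y}) (measure_pmf.prob Q {y'. D y' = D y}) w" for y
  define \<tau> where "\<tau> s = (\<Sum>y\<in>UNIV. pmf Q y * of_bool (s < D y))" for s
  define G where "G s = (\<Sum>y\<in>UNIV. pmf Q y * m y * of_bool (s < D y))" for s
  have c0: "0 \<le> c" using cN w by (meson order_trans zero_le_power diff_ge_0_iff_ge)
  have m01: "0 \<le> m y" "m y \<le> 1" for y unfolding m_def by (rule mm_bounds)+
  have sum1: "(\<Sum>y\<in>UNIV. pmf Q y) = 1" by (rule sum_pmf_eq_1) auto
  have tau01: "0 \<le> \<tau> s" "\<tau> s \<le> 1" for s
  proof -
    show "0 \<le> \<tau> s" unfolding \<tau>_def by (intro sum_nonneg) auto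
    have "\<tau> s \<le> (\<Sum>y\<in>UNIV. pmf Q y)" unfolding \<tau>_def by (intro sum_mono) auto
    then show "\<tau> s \<le> 1" using sum1 by simp
  qed
  have G01: "0 \<le> G s" "G s \<le> 1" for s
  proof -
    show "0 \<le> G s" unfolding G_def using m01 by (intro sum_nonneg) auto
    have "G s \<le> (\<Sum>y\<in>UNIV. pmf Q y)" unfolding G_def
      by (intro sum_mono) (auto intro: mult_left_le m01)
    then show "G s \<le> 1" using sum1 by simp
  qed
  have mass': "w \<le> (\<Sum>y\<in>UNIV. pmf Q y * m y)" unfolding m_def by (rule mass[OF w])
  have Gge: "\<tau> s - 1 + w \<le> G s" for s
  proof -
    have A: "(\<Sum>y\<in>UNIV. pmf Q y * m y) = G s + (\<Sum>y\<in>UNIV. pmf Q y * m y * of_bool (\<not> s < D y))"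
      unfolding G_def sum.distrib[symmetric] by (rule sum.cong) auto
    have B: "1 = \<tau> s + (\<Sum>y\<in>UNIV. pmf Q y * of_bool (\<not> s < D y))"
      unfolding \<tau>_def sum1[symmetric] sum.distrib[symmetric] by (rule sum.cong) auto
    have C: "(\<Sum>y\<in>UNIV. pmf Q y * m y * of_bool (\<not> s < D y)) \<le> (\<Sum>y\<in>UNIV. pmf Q y * of_bool (\<not> s < D y))"
      by (intro sum_mono) (auto intro: mult_left_le m01)
    show ?thesis using A B C mass' by linarith
  qed
  have pwi: "indK K s * \<tau> s ^ Suc N \<le> indK K s * ((1 - c) / w * G s + c * \<tau> s)" for s
  proof -
    have "\<tau> s ^ Suc N \<le> (1 - c) / w * max 0 (\<tau> s - 1 + w) + c * \<tau> s"
      by (rule pw[OF tau01 w cN c1])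
    also have "\<dots> \<le> (1 - c) / w * G s + c * \<tau> s"
      using Gge[of s] G01[of s] c1 w by (intro add_right_mono mult_left_mono) auto
    finally show ?thesis by (intro mult_left_mono) (auto simp: indK_def)
  qed
  have measT[measurable]: "\<tau> \<in> borel_measurable borel" unfolding \<tau>_def by measurable
  have measG[measurable]: "G \<in> borel_measurable borel" unfolding G_def by measurable
  have intT: "integrable lborel (\<lambda>s. indK K s * \<tau> s)"
    by (rule intK[where B=1]) (use tau01 in auto)
  have intG: "integrable lborel (\<lambda>s. indK K s * G s)"
    by (rule intK[where B=1]) (use G01 in auto)
  have intTM: "integrable lborel (\<lambda>s. indK K s * \<tau> s ^ Suc N)"
    by (rule intK[where B=1]) (use tau01 in \<open>auto simp del: power_Suc intro!: power_le_one\<close>)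
  have "measure_pmf.expectation (Pi_pmf {..<Suc N} dflt (\<lambda>_. Q)) (\<lambda>ys. Min ((\<lambda>i. D (ys i)) ` {..<Suc N}))
     = (\<integral>s. indK K s * \<tau> s ^ Suc N \<partial>lborel)"
    unfolding \<tau>_def by (rule E1[OF D]) simp
  also have "\<dots> \<le> (\<integral>s. (1 - c) / w * (indK K s * G s) + c * (indK K s * \<tau> s) \<partial>lborel)"
    by (rule integral_mono[OF intTM]) (use intT intG pwi in \<open>auto simp: algebra_simps\<close>)
  also have "\<dots> = (1 - c) / w * (\<integral>s. indK K s * G s \<partial>lborel) + c * (\<integral>s. indK K s * \<tau> s \<partial>lborel)"
    using intT intG by simp
  also have "(\<integral>s. indK K s * G s \<partial>lborel) = (\<Sum>y\<in>UNIV. pmf Q y * m y * D y)"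
    unfolding G_def by (rule layer_sum[OF D])
  also have "(\<integral>s. indK K s * \<tau> s \<partial>lborel) = (\<Sum>y\<in>UNIV. pmf Q y * D y)"
    using layer_sum[OF D, of Q "\<lambda>_. 1"] unfolding \<tau>_def by simp
  finally show ?thesis unfolding m_def by (simp add: algebra_simps)
qed



lemma pair_exp:
  fixes f :: "'x::finite \<times> 'b \<Rightarrow> real"
  assumes fin: "finite (set_pmf B)"
  shows "measure_pmf.expectation (pair_pmf P B) f = (\<Sum>x\<in>UNIV. pmf P x * measure_pmf.expectation B (\<lambda>b. f (x, b)))"
proof -
  have "measure_pmf.expectation (pair_pmf P B) f = (\<Sum>z\<in>UNIV \<times> set_pmf B. pmf (pair_pmf P B) z * f z)"
    by (subst integral_measure_pmf[of "UNIV \<times> set_pmf B"]) (use fin in \<open>auto simp: set_pair_pmf\<close>)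
  also have "\<dots> = (\<Sum>x\<in>UNIV. \<Sum>b\<in>set_pmf B. pmf P x * (pmf B b * f (x, b)))"
    by (simp only: sum.cartesian_product) (rule sum.cong, auto simp: pmf_pair)
  also have "\<dots> = (\<Sum>x\<in>UNIV. pmf P x * measure_pmf.expectation B (\<lambda>b. f (x, b)))"
    by (simp add: pmf_sum_set[OF fin] sum_distrib_left)
  finally show ?thesis .
qed

lemma Dt_eq:
  fixes P :: "'x::finite pmf" and Q :: "'y::finite pmf" and d :: "'x \<Rightarrow> 'y \<Rightarrow> real"
  assumes bnd: "\<And>x y. \<bar>d x y\<bar> \<le> K"
  shows "D_tilde P d w Q = inverse w * (\<Sum>x\<in>UNIV. pmf P x * (\<Sum>y\<in>UNIV. pmf Q y *
     (d x y * mm (measure_pmf.prob Q {y'. d x y' < d x y}) (measure_pmf.prob Q {y'. d x y' = d x y}) w)))"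
  unfolding D_tilde_def p_c_def
  using D_reduce[OF bnd, where a="\<lambda>x y. measure_pmf.prob Q {y'. d x y' < d x y}" and b="\<lambda>x y. measure_pmf.prob Q {y'. d x y' = d x y}" and w=w and P=P and Q=Q]
  unfolding UU_def by simp

lemma mm_one:
  fixes Q :: "'y pmf" and D :: "'y \<Rightarrow> real"
  shows "mm (measure_pmf.prob Q {y'. D y' < v}) (measure_pmf.prob Q {y'. D y' = v}) 1 = 1"
proof (rule mm_eq)
  have "measure_pmf.prob Q {y'. D y' < v} + measure_pmf.prob Q {y'. D y' = v} = measure_pmf.prob Q ({y'. D y' < v} \<union> {y'. D y' = v})"
    by (rule measure_pmf.finite_measure_Union[symmetric]) (auto simp: disjoint_iff)
  also have "\<dots> \<le> 1" by simp
  finally have s: "measure_pmf.prob Q {y'. D y' < v} + measure_pmf.prob Q {y'. D y' = v} \<le> 1" .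
  fix u :: real assume u: "0 \<le> u" "u \<le> 1"
  have "u * measure_pmf.prob Q {y'. D y' = v} \<le> measure_pmf.prob Q {y'. D y' = v}"
    using u by (simp add: mult_left_le_one_le)
  then show "(measure_pmf.prob Q {y'. D y' < v} + u * measure_pmf.prob Q {y'. D y' = v} \<le> 1) = (u \<le> 1)"
    using s u by simp
qed auto



theorem corollary1:
  fixes P :: "'x::finite pmf" and Q :: "'y::finite pmf"
    and d :: "'x \<Rightarrow> 'y \<Rightarrow> real" and dmax R lam :: real and M :: nat
  assumes d_nonneg: "\<And>x y. 0 \<le> d x y"
    and d_bound: "\<And>x y. d x y \<le> dmax"
    and R_nonneg: "0 \<le> R"
    and expR_int: "exp R \<in> \<int>"
    and M_def: "real M = exp R + 1"
    and lam: "lam < R"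
  shows "measure_pmf.expectation (pair_pmf P (Pi_pmf {..<M} undefined (\<lambda>_. Q)))
           (\<lambda>(x, ys). Min ((\<lambda>i. d x (ys i)) ` {..<M}))
         \<le> D_tilde P d (exp (-(R - lam))) Q
           + (D_tilde P d 1 Q - D_tilde P d (exp (-(R - lam))) Q) * exp (- exp lam) * (exp lam + 1)
       \<and> D_tilde P d (exp (-(R - lam))) Q
           + (D_tilde P d 1 Q - D_tilde P d (exp (-(R - lam))) Q) * exp (- exp lam) * (exp lam + 1)
         \<le> D_tilde P d (exp (-(R - lam))) Q + dmax * exp (- exp lam) * (exp lam + 1)"
proof -
  define w where "w = exp (-(R - lam))"
  define c where "c = exp (- exp lam) * (exp lam + 1)"
  have "real M > 0" using M_def by (simp add: add_pos_pos)
  then obtain N where MN: "M = Suc N" using gr0_implies_Suc by auto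
  have N_eq: "real N = exp R" using M_def MN by simp
  have w0: "0 < w" unfolding w_def by simp
  have w1: "w \<le> 1" unfolding w_def using lam by simp
  have Nw: "real N * w = exp lam" unfolding w_def N_eq by (simp add: exp_add[symmetric])
  have c0: "0 \<le> c" unfolding c_def by simp
  have c1: "c \<le> 1"
  proof -
    have "exp lam + 1 \<le> exp (exp lam)" using exp_ge_add_one_self[of "exp lam"] by linarith
    then have "exp (- exp lam) * (exp lam + 1) \<le> exp (- exp lam) * exp (exp lam)"
      by (intro mult_left_mono) auto
    then show ?thesis unfolding c_def by (simp add: exp_minus field_simps)
  qed
  have cN: "(1 - w) ^ N \<le> c"
  proof -
    have "1 - w \<le> exp (- w)" using exp_ge_add_one_self[of "-w"] by linarith
    then have "(1 - w) ^ N \<le> exp (- w) ^ N" using w1 by (intro power_mono) auto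
    also have "\<dots> = exp (- (real N * w))" by (simp add: exp_of_nat_mult[symmetric])
    also have "\<dots> = exp (- exp lam)" using Nw by simp
    also have "\<dots> \<le> c" unfolding c_def by simp
    finally show ?thesis .
  qed
  have bnd: "\<And>x y. \<bar>d x y\<bar> \<le> dmax" using d_nonneg d_bound by (simp add: abs_of_nonneg)
  define m where "m x y = mm (measure_pmf.prob Q {y'. d x y' < d x y}) (measure_pmf.prob Q {y'. d x y' = d x y}) w" for x y
  define Ew where "Ew x = (\<Sum>y\<in>UNIV. pmf Q y * (d x y * m x y))" for x
  define E1 where "E1 x = (\<Sum>y\<in>UNIV. pmf Q y * d x y)" for x
  have Dw: "D_tilde P d w Q = inverse w * (\<Sum>x\<in>UNIV. pmf P x * Ew x)"
    unfolding Ew_def m_def by (rule Dt_eq[OF bnd])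
  have D1: "D_tilde P d 1 Q = (\<Sum>x\<in>UNIV. pmf P x * E1 x)"
    unfolding E1_def by (subst Dt_eq[OF bnd]) (simp add: mm_one)
  have fin: "finite (set_pmf (Pi_pmf {..<M} undefined (\<lambda>_. Q)))"
    by (simp add: set_Pi_pmf finite_PiE_dflt)
  have "measure_pmf.expectation (pair_pmf P (Pi_pmf {..<M} undefined (\<lambda>_. Q)))
           (\<lambda>(x, ys). Min ((\<lambda>i. d x (ys i)) ` {..<M}))
      = (\<Sum>x\<in>UNIV. pmf P x * measure_pmf.expectation (Pi_pmf {..<M} undefined (\<lambda>_. Q)) (\<lambda>ys. Min ((\<lambda>i. d x (ys i)) ` {..<M})))"
    by (subst pair_exp[OF fin]) simp
  also have "\<dots> \<le> (\<Sum>x\<in>UNIV. pmf P x * ((1 - c) / w * Ew x + c * E1 x))"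
  proof (rule sum_mono, rule mult_left_mono)
    fix x
    show "measure_pmf.expectation (Pi_pmf {..<M} undefined (\<lambda>_. Q)) (\<lambda>ys. Min ((\<lambda>i. d x (ys i)) ` {..<M}))
        \<le> (1 - c) / w * Ew x + c * E1 x"
      unfolding MN Ew_def E1_def m_def
      by (rule perx[where K=dmax]) (use d_nonneg d_bound w0 w1 cN c1 in auto)
  qed simp
  also have "\<dots> = (1 - c) * (inverse w * (\<Sum>x\<in>UNIV. pmf P x * Ew x)) + c * (\<Sum>x\<in>UNIV. pmf P x * E1 x)"
    by (simp only: sum_distrib_left sum.distrib[symmetric]) (rule sum.cong, auto simp: algebra_simps divide_inverse)
  also have "\<dots> = D_tilde P d w Q + (D_tilde P d 1 Q - D_tilde P d w Q) * c"
    unfolding Dw D1 by (simp add: algebra_simps)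
  finally have part1: "measure_pmf.expectation (pair_pmf P (Pi_pmf {..<M} undefined (\<lambda>_. Q)))
           (\<lambda>(x, ys). Min ((\<lambda>i. d x (ys i)) ` {..<M})) \<le> D_tilde P d w Q + (D_tilde P d 1 Q - D_tilde P d w Q) * c" .
  have Dw0: "0 \<le> D_tilde P d w Q"
    unfolding Dw Ew_def m_def using w0 d_nonneg
    by (intro mult_nonneg_nonneg sum_nonneg) (auto intro!: mult_nonneg_nonneg mm_bounds)
  have D1le: "D_tilde P d 1 Q \<le> dmax"
  proof -
    have "D_tilde P d 1 Q \<le> (\<Sum>x\<in>UNIV. pmf P x * (\<Sum>y\<in>UNIV. pmf Q y * dmax))"
      unfolding D1 E1_def using d_bound
      by (intro sum_mono mult_left_mono) auto
    also have "\<dots> = dmax" by (simp add: sum_distrib_right[symmetric] sum_pmf_eq_1)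
    finally show ?thesis .
  qed
  have part2: "D_tilde P d w Q + (D_tilde P d 1 Q - D_tilde P d w Q) * c \<le> D_tilde P d w Q + dmax * c"
    using Dw0 D1le c0 by (intro add_left_mono mult_right_mono) auto
  show ?thesis using part1 part2 unfolding w_def c_def by (simp add: mult.assoc)
qed

end
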